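(* For every nonnegative integer $r$, $$\sum_{n=1}^{\infty}\frac{n^2}{(2n+2r+1)(2n-1)^2(2n+1)}\frac{\binom{2n}{n}}{\binom{2n+2r}{n+r}}=\frac{1}{2^{2r+1}}\left(\frac{2\wp(2r+2)+\wp(2r)}{8}-\frac{1}{16(r+1)}\right),$$ where $\wp(q)=\int_0^{\pi/2} z\sin^q z\,\mathrm{d}z$. *)

theory Defs
  imports "HOL-Analysis.Analysis"
begin

definition wp :: "nat \<Rightarrow> real" where
  "wp q = integral {0..pi/2} (\<lambda>z. z * sin z ^ q)"

end

theory Submission
  imports Defs "HOL-Real_Asymp.Real_Asymp"
begin

lemma wp0: "wp 0 = pi^2/8"
proof -
  have "((\<lambda>z. z) has_integral ((pi/2)^2/2 - 0^2/2)) {0..pi/2}"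
    by (rule fundamental_theorem_of_calculus)
       (auto intro!: derivative_eq_intros simp: has_real_derivative_iff_has_vector_derivative[symmetric])
  then show ?thesis unfolding wp_def by (simp add: integral_unique power2_eq_square)
qed

lemma deriv_aux:
  fixes sn cn z sp mm :: real
  assumes cs: "cn * cn = 1 - sn * sn" and mm: "mm \<ge> 0"
  shows "((-1) * (sn * sp) + (mm+1) * (cn * 1 * sp) * (-z)) * cn + (-sn) * 1 * ((-z) * (sn * sp)) + ((mm+2) * (cn * 1 * (sn * sp)) * (mm+2) - sn * sn * sp * 0)/((mm+2) * (mm+2))
       = (mm+2) * (z * (sn * sn * sp)) - (mm+1) * (z * sp)"
proof -
  have nz: "(mm+2) * (mm+2) \<noteq> 0" using mm by simp
  have q0: "(mm+2) * (cn * 1 * (sn * sp)) * (mm+2) - sn * sn * sp * 0 = (cn * sn * sp) * ((mm+2) * (mm+2))"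
    by (simp add: algebra_simps)
  have q: "((mm+2) * (cn * 1 * (sn * sp)) * (mm+2) - sn * sn * sp * 0)/((mm+2) * (mm+2)) = cn * sn * sp"
    unfolding q0 using nz by simp
  have "((-1) * (sn * sp) + (mm+1) * (cn * 1 * sp) * (-z)) * cn = - (sn * sp * cn) - (mm+1) * z * sp * (cn * cn)" by (simp add: algebra_simps)
  also have "\<dots> = - (sn * sp * cn) - (mm+1) * z * sp * (1 - sn * sn)" by (simp only: cs)
  finally have r: "((-1) * (sn * sp) + (mm+1) * (cn * 1 * sp) * (-z)) * cn = - (sn * sp * cn) - (mm+1) * z * sp * (1 - sn * sn)" .
  show ?thesis unfolding q r by (simp add: algebra_simps)
qed

lemma wp_deriv: "((\<lambda>z. - z * sin z ^ (m+1) * cos z + sin z ^ (m+2) / (real m + 2)) has_real_derivative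
   ((real m+2) * (z * sin z ^ (m+2)) - (real m+1) * (z * sin z ^ m))) (at z)"
proof -
  have e1: "sin z ^ (m + 1 - Suc 0) = sin z ^ m" by simp
  have e2: "sin z ^ (m + 2 - Suc 0) = sin z * sin z ^ m" by simp
  have e3: "sin z ^ (m + 1) = sin z * sin z ^ m" by simp
  have e4: "sin z ^ (m + 2) = sin z * sin z * sin z ^ m" by (simp add: power_Suc)
  have cs: "cos z * cos z = 1 - sin z * sin z" using sin_cos_squared_add[of z] by (simp add: power2_eq_square algebra_simps)
  have "((\<lambda>z. - z * sin z ^ (m+1) * cos z + sin z ^ (m+2) / (real m + 2)) has_real_derivative
     ((- 1 * sin z ^ (m + 1) + real (m + 1) * (cos z * 1 * sin z ^ (m + 1 - Suc 0)) * - z) * cos z +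
     - sin z * 1 * (- z * sin z ^ (m + 1)) + (real (m + 2) * (cos z * 1 * sin z ^ (m + 2 - Suc 0)) * (real m + 2) -
      sin z ^ (m + 2) * 0) / ((real m + 2) * (real m + 2)))) (at z)"
    apply (rule derivative_eq_intros refl)+
    apply simp
    apply (rule refl)
    apply (rule refl)
    done
  also have "((- 1 * sin z ^ (m + 1) + real (m + 1) * (cos z * 1 * sin z ^ (m + 1 - Suc 0)) * - z) * cos z +
     - sin z * 1 * (- z * sin z ^ (m + 1)) + (real (m + 2) * (cos z * 1 * sin z ^ (m + 2 - Suc 0)) * (real m + 2) -
      sin z ^ (m + 2) * 0) / ((real m + 2) * (real m + 2))) = 
     ((real m+2) * (z * sin z ^ (m+2)) - (real m+1) * (z * sin z ^ m))"
    unfolding e1 e2 e3 e4 of_nat_add of_nat_1 of_nat_numeral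
    by (rule deriv_aux[OF cs]) simp
  finally show ?thesis .
qed
lemma wp_rec: "wp (m+2) = (real m+1)/(real m+2) * wp m + 1/(real m+2)^2"
proof -
  define F where "F z = - z * sin z ^ (m+1) * cos z + sin z ^ (m+2) / (real m + 2)" for z
  have d: "(F has_real_derivative ((real m+2) * (z * sin z ^ (m+2)) - (real m+1) * (z * sin z ^ m))) (at z)" for z
    unfolding F_def by (rule wp_deriv)
  have "((\<lambda>z. (real m+2) * (z * sin z ^ (m+2)) - (real m+1) * (z * sin z ^ m)) has_integral (F (pi/2) - F 0)) {0..pi/2}"
  proof (rule fundamental_theorem_of_calculus)
    show "0 \<le> pi/2" by simp
    fix x assume "x \<in> {0..pi/2}"
    show "(F has_vector_derivative ((real m+2) * (x * sin x ^ (m+2)) - (real m+1) * (x * sin x ^ m))) (at x within {0..pi/2})"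
      unfolding has_real_derivative_iff_has_vector_derivative[symmetric]
      by (rule has_field_derivative_at_within[OF d])
  qed
  moreover have "F (pi/2) - F 0 = 1/(real m + 2)" by (simp add: F_def)
  ultimately have h: "((\<lambda>z. (real m+2) * (z * sin z ^ (m+2)) - (real m+1) * (z * sin z ^ m)) has_integral (1/(real m + 2))) {0..pi/2}" by simp
  have i1: "((\<lambda>z. z * sin z ^ (m+2)) has_integral wp (m+2)) {0..pi/2}" unfolding wp_def
    by (intro integrable_integral integrable_continuous_interval continuous_intros)
  have i2: "((\<lambda>z. z * sin z ^ m) has_integral wp m) {0..pi/2}" unfolding wp_def
    by (intro integrable_integral integrable_continuous_interval continuous_intros)
  have "((\<lambda>z. (real m+2) * (z * sin z ^ (m+2)) - (real m+1) * (z * sin z ^ m)) has_integral ((real m+2) * wp (m+2) - (real m+1) * wp m)) {0..pi/2}"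
    by (intro has_integral_diff has_integral_mult_right i1 i2)
  from has_integral_unique[OF h this] have "(real m+2) * wp (m+2) - (real m+1) * wp m = 1/(real m + 2)" by simp
  then have "wp (m+2) * (real m+2) = (real m+1) * wp m + 1/(real m+2)" by (simp add: algebra_simps)
  moreover have pos: "real m + 2 > 0" by simp
  ultimately have "wp (m+2) = ((real m+1) * wp m + 1/(real m+2)) / (real m+2)" by (simp add: eq_divide_eq)
  also have "\<dots> = (real m+1)/(real m+2) * wp m + 1/(real m+2)^2" using pos by (simp add: add_divide_distrib power2_eq_square times_divide_eq_left[symmetric] del: times_divide_eq_left)
  finally show ?thesis .
qed
lemma central_binom_step: "real ((2*m+2) choose (m+1)) = real ((2*m) choose m) * (2*(2*real m+1)) / (real m+1)"
proof -
  have b1: "real ((2*m+2) choose (m+1)) = fact (2*m+2) / (fact (m+1) * fact (m+1))"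
  proof -
    have "real ((2*m+2) choose (m+1)) = fact (2*m+2) / (fact (m+1) * fact (2*m+2 - (m+1)))"
      by (rule binomial_fact) simp
    moreover have "2*m+2 - (m+1) = (m+1::nat)" by simp
    ultimately show ?thesis by simp
  qed
  have b0: "real ((2*m) choose m) = fact (2*m) / (fact m * fact m)"
  proof -
    have "real ((2*m) choose m) = fact (2*m) / (fact m * fact (2*m - m))"
      by (rule binomial_fact) simp
    moreover have "2*m - m = (m::nat)" by simp
    ultimately show ?thesis by simp
  qed
  have f2: "(fact (2*m+2) :: real) = (2*real m+2)*(2*real m+1) * fact (2*m)"
  proof -
    have "2*m+2 = Suc (Suc (2*m))" by simp
    then have "(fact (2*m+2) :: real) = fact (Suc (Suc (2*m)))" by simp
    also have "\<dots> = real (Suc (Suc (2*m))) * (real (Suc (2*m)) * fact (2*m))" by (simp only: fact_Suc)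
    finally show ?thesis by (simp add: algebra_simps)
  qed
  have f1: "(fact (m+1) :: real) = (real m+1) * fact m" by simp
  have pf: "(fact m :: real) > 0" by simp
  have pm: "real m + 1 > 0" by simp
  show ?thesis unfolding b1 b0 f2 f1 using pf pm
    by (simp add: divide_simps) (simp add: algebra_simps)
qed
definition cc :: "nat \<Rightarrow> nat \<Rightarrow> real" where
  "cc n r = (\<Prod>k<r. (real n + real k + 1) / (2 * (2 * real n + 2 * real k + 1)))"

lemma cc_Suc_r: "cc n (Suc r) = cc n r * ((real n + real r + 1) / (2 * (2 * real n + 2 * real r + 1)))"
  by (simp add: cc_def)

lemma cc_0: "cc n 0 = 1" by (simp add: cc_def)

lemma aux3: fixes K u w :: real shows "K * ((u+w+1)*(2*u+1)/((u+1)*(2*u+2*w+1))) * ((u+1+w+1)/(2*(2*(u+1)+2*w+1))) = K * ((u+w+1)/(2*(2*u+2*w+1))) * ((u+(w+1)+1)*(2*u+1)/((u+1)*(2*u+2*(w+1)+1)))"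
proof -
  have a: "u+1+w+1 = u+(w+1)+1" "2*(u+1)+2*w+1 = 2*u+2*(w+1)+1" by simp_all
  show ?thesis unfolding a by (simp only: times_divide_eq_right times_divide_eq_left divide_divide_eq_left ac_simps)
qed
lemma aux4: fixes A B p q :: real assumes "B \<noteq> 0" "p \<noteq> 0" "q \<noteq> 0" shows "A/(B*p/q) = A/B*(q/p)"
  using assms by (simp add: field_simps)

lemma cc_binom: "real ((2*n) choose n) / real ((2*n + 2*r) choose (n + r)) = cc n r"
proof (induction r)
  case 0
  then show ?case by (simp add: cc_0)
next
  case (Suc r)
  have i1: "2*n + 2*Suc r = 2*(n+r)+2" "n + Suc r = (n+r)+1" by simp_all
  have i2: "2*n + 2*r = 2*(n+r)" by simp
  have e: "real ((2*n + 2*Suc r) choose (n + Suc r)) = real ((2*(n+r)) choose (n+r)) * (2*(2*real (n+r)+1)) / (real (n+r)+1)"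
    unfolding i1 by (rule central_binom_step)
  have pos: "real ((2*(n+r)) choose (n+r)) \<noteq> 0" by simp
  have "real ((2*n) choose n) / real ((2*n + 2*Suc r) choose (n + Suc r))
      = real ((2*n) choose n) / real ((2*(n+r)) choose (n+r)) * ((real (n+r)+1) / (2*(2*real (n+r)+1)))"
    unfolding e by (rule aux4) (use pos in auto)
  also have "\<dots> = cc n r * ((real n + real r + 1) / (2 * (2 * real n + 2 * real r + 1)))"
    using Suc.IH unfolding i2 by (simp add: algebra_simps)
  finally show ?case by (simp only: cc_Suc_r)
qed

lemma cc_Suc_n: "cc (Suc n) r = cc n r * ((real n + real r + 1) * (2 * real n + 1) / ((real n + 1) * (2 * real n + 2 * real r + 1)))"
proof (induction r)
  case 0
  then show ?case by (simp add: cc_0)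
next
  case (Suc r)
  have "cc (Suc n) (Suc r) = cc n r * ((real n + real r + 1) * (2 * real n + 1) / ((real n + 1) * (2 * real n + 2 * real r + 1)))
     * ((real n + 1 + real r + 1) / (2 * (2 * (real n + 1) + 2 * real r + 1)))"
    unfolding cc_Suc_r Suc.IH by simp
  also have "\<dots> = cc n r * ((real n + real r + 1) / (2 * (2 * real n + 2 * real r + 1)))
     * ((real n + (real r + 1) + 1) * (2 * real n + 1) / ((real n + 1) * (2 * real n + 2 * (real r + 1) + 1)))"
    by (rule aux3)
  also have "\<dots> = cc n (Suc r) * ((real n + real (Suc r) + 1) * (2 * real n + 1) / ((real n + 1) * (2 * real n + 2 * real (Suc r) + 1)))"
    unfolding cc_Suc_r by simp
  finally show ?case .
qed

lemma alg0:
  fixes x R C a b c d e f g :: real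
  assumes nz: "a \<noteq> 0" "b \<noteq> 0" "c \<noteq> 0" "d \<noteq> 0" "e \<noteq> 0" "f \<noteq> 0" "g \<noteq> 0"
  and eqs: "a = 2*x-1" "b = 2*x+2*R+1" "c = 2*x+2*R+3" "d = 2*x+1" "e = x+1" "f = R+2" "g = 3*R+2"
  shows "x^2/(c*a^2*d) * (C*((x+R+1)/(2*b)))
    = (3*R+5)*(2*R+1)/(8*f*g) * (x^2/(b*a^2*d) * C)
      + (e*x*((3*R+4)*e-(R+1)) * (C*((x+R+1)*d/(e*b)))
            / (8*f^2*g*d^2*c)
       - x*(x-1)*((3*R+4)*x-(R+1)) * C / (8*f^2*g*a^2*b))"
proof -
  define Z where "Z = C*x/(8*f^2*g*a^2*b*c*d)"
  have E1: "x^2/(c*a^2*d) * (C*((x+R+1)/(2*b))) = Z*(4*f^2*g*x*(x+R+1))"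
    unfolding Z_def using nz by (simp add: field_simps power2_eq_square)
  have E2: "(3*R+5)*(2*R+1)/(8*f*g) * (x^2/(b*a^2*d) * C) = Z*((3*R+5)*(2*R+1)*f*x*c)"
    unfolding Z_def using nz by (simp add: field_simps power2_eq_square)
  have E3: "e*x*((3*R+4)*e-(R+1)) * (C*((x+R+1)*d/(e*b))) / (8*f^2*g*d^2*c) = Z*(((3*R+4)*e-(R+1))*(x+R+1)*a^2)"
    unfolding Z_def using nz by (simp add: field_simps power2_eq_square)
  have E4: "x*(x-1)*((3*R+4)*x-(R+1)) * C / (8*f^2*g*a^2*b) = Z*((x-1)*((3*R+4)*x-(R+1))*c*d)"
    unfolding Z_def using nz by (simp add: field_simps power2_eq_square)
  have P: "4*f^2*g*x*(x+R+1) = (3*R+5)*(2*R+1)*f*x*c + (((3*R+4)*e-(R+1))*(x+R+1)*a^2) - ((x-1)*((3*R+4)*x-(R+1))*c*d)"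
    unfolding eqs by (simp add: algebra_simps power2_eq_square)
  show ?thesis unfolding E1 E2 E3 E4 P by (simp add: algebra_simps)
qed

definition T :: "nat \<Rightarrow> nat \<Rightarrow> real" where
  "T r = (\<lambda>m. let n = m + 1 in
            (real n ^ 2 / (real (2*n + 2*r + 1) * (2 * real n - 1) ^ 2 * real (2*n + 1)))
            * (real ((2*n) choose n) / real ((2*n + 2*r) choose (n + r))))"

lemma T_eq: "T r m = real (m+1) ^ 2 / ((2*real (m+1) + 2*real r + 1) * (2 * real (m+1) - 1) ^ 2 * (2*real (m+1) + 1)) * cc (m+1) r"
  unfolding T_def Let_def cc_binom[symmetric] by simp

definition G :: "nat \<Rightarrow> nat \<Rightarrow> real" where
  "G r n = real n * (real n - 1) * ((3*real r+4)*real n-(real r+1)) * cc n r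
      / (8*(real r+2)^2*(3*real r+2)*(2*real n-1)^2*(2*real n+2*real r+1))"

definition gam :: "nat \<Rightarrow> real" where
  "gam r = (3*real r+5)*(2*real r+1)/(8*(real r+2)*(3*real r+2))"

lemma step: "T (Suc r) m = gam r * T r m + (G r (m+2) - G r (m+1))"
proof -
  define x where "x = real (m+1)"
  define R where "R = real r"
  define C where "C = cc (m+1) r"
  have x1: "x \<ge> 1" unfolding x_def by simp
  have R0: "R \<ge> 0" unfolding R_def by simp
  have c2: "cc (Suc (m+1)) r = C*((x+R+1)*(2*x+1)/((x+1)*(2*x+2*R+1)))"
    unfolding C_def x_def R_def cc_Suc_n by simp
  have c1: "cc (m+1) (Suc r) = C*((x+R+1)/(2*(2*x+2*R+1)))"
    unfolding C_def x_def R_def cc_Suc_r by simp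
  have e1: "2*real (m+1) + 2*real (Suc r) + 1 = 2*x+2*R+3" unfolding x_def R_def by simp
  have lhs: "T (Suc r) m = x^2/((2*x+2*R+3)*(2*x-1)^2*(2*x+1)) * (C*((x+R+1)/(2*(2*x+2*R+1))))"
    unfolding T_eq e1 c1 unfolding x_def ..
  have t0: "T r m = x^2/((2*x+2*R+1)*(2*x-1)^2*(2*x+1)) * C"
    unfolding T_eq C_def x_def R_def ..
  have m2: "m+2 = Suc (m+1)" by simp
  have rx: "real (Suc (m+1)) = x+1" unfolding x_def by simp
  have g2: "G r (m+2) = (x+1)*x*((3*R+4)*(x+1)-(R+1)) * (C*((x+R+1)*(2*x+1)/((x+1)*(2*x+2*R+1))))
            / (8*(R+2)^2*(3*R+2)*(2*x+1)^2*(2*x+2*R+3))"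
  proof -
    have "G r (m+2) = (x+1)*((x+1)-1)*((3*R+4)*(x+1)-(R+1)) * cc (Suc (m+1)) r
            / (8*(R+2)^2*(3*R+2)*(2*(x+1)-1)^2*(2*(x+1)+2*R+1))"
      unfolding m2 G_def rx R_def ..
    also have "(x+1)-1 = x" by simp
    also have "2*(x+1)-1 = 2*x+1" by simp
    also have "2*(x+1)+2*R+1 = 2*x+2*R+3" by simp
    finally show ?thesis unfolding c2 .
  qed
  have g1: "G r (m+1) = x*(x-1)*((3*R+4)*x-(R+1)) * C / (8*(R+2)^2*(3*R+2)*(2*x-1)^2*(2*x+2*R+1))"
    unfolding G_def C_def x_def R_def ..
  have gm: "gam r = (3*R+5)*(2*R+1)/(8*(R+2)*(3*R+2))" unfolding gam_def R_def ..
  show ?thesis unfolding lhs t0 g2 g1 gm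
    by (rule alg0) (use x1 R0 in auto)
qed

lemma cc_lim: "(\<lambda>n. cc n r) \<longlonglongrightarrow> (1/4)^r"
proof -
  have "(\<lambda>n. \<Prod>k<r. (real n + real k + 1) / (2 * (2 * real n + 2 * real k + 1))) \<longlonglongrightarrow> (\<Prod>k<r. 1/4)"
  proof (rule tendsto_prod)
    fix k assume "k \<in> {..<r}"
    show "(\<lambda>n. (real n + real k + 1) / (2 * (2 * real n + 2 * real k + 1))) \<longlonglongrightarrow> 1/4"
      by real_asymp
  qed
  then show ?thesis unfolding cc_def by simp
qed

lemma rat_lim: fixes R :: real assumes R: "R \<ge> 0" shows "(\<lambda>n. real n * (real n - 1) * ((3*R+4)*real n-(R+1))
      / (8*(R+2)^2*(3*R+2)*(2*real n-1)^2*(2*real n+2*R+1))) \<longlonglongrightarrow> (3*R+4)/(64*(R+2)^2*(3*R+2))"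
proof -
  define K where "K = 8*(R+2)^2*(3*R+2)"
  have lim: "(\<lambda>n. real n * (real n - 1) * ((3*R+4)*real n-(R+1)) / ((2*real n-1)^2*(2*real n+2*R+1))) \<longlonglongrightarrow> (3*R+4)/8"
    using R by real_asymp
  have t: "(\<lambda>n. (1/K) * (real n * (real n - 1) * ((3*R+4)*real n-(R+1)) / ((2*real n-1)^2*(2*real n+2*R+1)))) \<longlonglongrightarrow> (1/K) * ((3*R+4)/8)"
    by (rule tendsto_mult_left[OF lim])
  have v: "(1/K) * ((3*R+4)/8) = (3*R+4)/(64*(R+2)^2*(3*R+2))" unfolding K_def by simp
  have e: "(1/K) * (real n * (real n - 1) * ((3*R+4)*real n-(R+1)) / ((2*real n-1)^2*(2*real n+2*R+1)))
     = real n * (real n - 1) * ((3*R+4)*real n-(R+1)) / (8*(R+2)^2*(3*R+2)*(2*real n-1)^2*(2*real n+2*R+1))" for n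
    unfolding K_def by (simp add: mult.assoc)
  show ?thesis using t unfolding v e .
qed

lemma G_lim: "G r \<longlonglongrightarrow> (3*real r+4)/(64*(real r+2)^2*(3*real r+2)) * (1/4)^r"
proof -
  have "(\<lambda>n. real n * (real n - 1) * ((3*real r+4)*real n-(real r+1))
      / (8*(real r+2)^2*(3*real r+2)*(2*real n-1)^2*(2*real n+2*real r+1)) * cc n r)
     \<longlonglongrightarrow> (3*real r+4)/(64*(real r+2)^2*(3*real r+2)) * (1/4)^r"
    by (intro tendsto_mult rat_lim cc_lim) simp
  moreover have "(\<lambda>n. real n * (real n - 1) * ((3*real r+4)*real n-(real r+1))
      / (8*(real r+2)^2*(3*real r+2)*(2*real n-1)^2*(2*real n+2*real r+1)) * cc n r) = G r"
    by (rule ext) (simp add: G_def)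
  ultimately show ?thesis by simp
qed

lemma G_1: "G r 1 = 0" by (simp add: G_def)

lemma odd_squares: "(\<lambda>n. 1 / (2*real n+1)^2) sums (pi^2/8)"
proof -
  have b: "(\<lambda>n. 1 / (real n+1)^2) sums (pi^2/6)" using inverse_squares_sums by (simp add: add.commute)
  have g: "(\<lambda>n. sum (\<lambda>n. 1 / (real n+1)^2) {n * 2 ..< n * 2 + 2}) sums (pi^2/6)"
    by (rule sums_group[OF b]) simp
  have g': "(\<lambda>n. 1 / (2*real n+1)^2 + 1/4 * (1 / (real n+1)^2)) sums (pi^2/6)"
  proof -
    have "sum (\<lambda>n. 1 / (real n+1)^2) {n * 2 ..< n * 2 + 2} = 1 / (2*real n+1)^2 + 1/4 * (1 / (real n+1)^2)" for n
    proof -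
      have "{n * 2 ..< n * 2 + 2} = {2*n, 2*n+1}" by auto
      then have "sum (\<lambda>n. 1 / (real n+1)^2) {n * 2 ..< n * 2 + 2} = 1 / (2*real n+1)^2 + 1 / (2*real n+2)^2"
        by (simp add: algebra_simps)
      also have "1 / (2*real n+2)^2 = 1/4 * (1 / (real n+1)^2)" by (simp add: field_simps power2_eq_square)
      finally show ?thesis .
    qed
    then show ?thesis using g by simp
  qed
  have "(\<lambda>n. (1 / (2*real n+1)^2 + 1/4 * (1 / (real n+1)^2)) - 1/4 * (1 / (real n+1)^2)) sums (pi^2/6 - 1/4 * (pi^2/6))"
    by (intro sums_diff g' sums_mult b)
  then show ?thesis by simp
qed

definition rhs :: "nat \<Rightarrow> real" where
  "rhs r = 1 / 2 ^ (2*r + 1) * ((2 * wp (2*r + 2) + wp (2*r)) / 8 - 1 / (16 * real (r + 1)))"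

lemma base_alg:
  fixes a b :: real
  assumes a: "a > 0" and b: "b = a+2"
  shows "((a+1)/2)^2/(b*a^2*b) * 1 = 1/16 * ((1/a^2 + 1/b^2) + (1/a - 1/b))"
proof -
  have nz: "a \<noteq> 0" "b \<noteq> 0" using a b by auto
  show ?thesis using nz
    apply (simp add: field_simps)
    apply (simp add: b)
    apply (simp add: algebra_simps power2_eq_square)
    done
qed

lemma base: "T 0 sums rhs 0"
proof -
  have o: "(\<lambda>n. 1 / (2*real n+1)^2) sums (pi^2/8)" by (rule odd_squares)
  have o2: "(\<lambda>n. 1 / (2*real n+3)^2) sums (pi^2/8 - 1)"
  proof -
    have "(\<lambda>n. 1 / (2*real (Suc n)+1)^2) sums (pi^2/8 - 1)"
      using sums_Suc_iff[of "\<lambda>n. 1 / (2*real n+1)^2" "pi^2/8 - 1"] o by simp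
    then show ?thesis by (simp add: algebra_simps)
  qed
  have tl: "(\<lambda>n. 1 / (2*real n+1) - 1 / (2*real (Suc n)+1)) sums (1 / (2*real 0+1) - 0)"
    by (rule telescope_sums') real_asymp
  have s: "(\<lambda>n. 1/16 * ((1 / (2*real n+1)^2 + 1 / (2*real n+3)^2) + (1 / (2*real n+1) - 1 / (2*real (Suc n)+1))))
      sums (1/16 * ((pi^2/8 + (pi^2/8 - 1)) + (1 / (2*real 0+1) - 0)))"
    by (intro sums_mult sums_add o o2 tl)
  have eq: "T 0 n = 1/16 * ((1 / (2*real n+1)^2 + 1 / (2*real n+3)^2) + (1 / (2*real n+1) - 1 / (2*real (Suc n)+1)))" for n
  proof -
    define a where "a = 2*real n+1"
    have a: "a > 0" unfolding a_def by simp
    have r: "real (n+1) = (a+1)/2" "2*real (n+1) + 2*real 0 + 1 = a+2" "2*real (n+1) - 1 = a"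
        "2*real (n+1) + 1 = a+2" "2*real n+3 = a+2" "2*real (Suc n)+1 = a+2" "2*real n+1 = a"
      unfolding a_def by simp_all
    have "((a+1)/2)^2/((a+2)*a^2*(a+2)) * 1 = 1/16 * ((1/a^2 + 1/(a+2)^2) + (1/a - 1/(a+2)))"
      by (rule base_alg[OF a refl])
    then show ?thesis unfolding T_eq cc_0 unfolding r(2-7) unfolding r(1) .
  qed
  have w2: "wp 2 = 1/2 * wp 0 + 1/4" using wp_rec[of 0] unfolding add_0_left by simp
  have v: "rhs 0 = 1/16 * ((pi^2/8 + (pi^2/8 - 1)) + (1 / (2*real 0+1) - 0))"
  proof -
    have z: "2*(0::nat)+2 = 2" "2*(0::nat) = 0" by simp_all
    have w2': "wp (Suc (Suc 0)) = 1/2 * wp 0 + 1/4" using w2 by (simp add: numeral_2_eq_2)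
    show ?thesis unfolding rhs_def z w2 wp0 by (simp add: power2_eq_square w2' wp0 field_simps)
  qed
  show ?thesis using s unfolding v eq[symmetric] by simp
qed

lemma rs_alg0:
  fixes W R P q1 q2 p1 tt :: real
  assumes nz: "q1 \<noteq> 0" "q2 \<noteq> 0" "p1 \<noteq> 0" "tt \<noteq> 0" "P \<noteq> 0"
  and eqs: "q1 = R+1" "q2 = R+2" "p1 = 2*R+1" "tt = 3*R+2"
  shows "1 / (4*P) * ((2 * ((2*R+3)/(2*q2) * W + 1/(2*q2)^2) + W) / 8 - 1 / (16 * q2))
    = (3*R+5)*p1/(8*q2*tt) * (1 / P * ((2 * W + (W - 1/(2*q1)^2)*(2*q1)/p1) / 8 - 1 / (16 * q1)))
      + (3*R+4)/(64*q2^2*tt) * (2/P)"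
  using nz
  apply (simp add: field_simps)
  apply (simp add: eqs)
  apply (simp add: eval_nat_numeral algebra_simps)
  done

lemma rhs_step: "rhs (Suc r) = gam r * rhs r + (3*real r+4)/(64*(real r+2)^2*(3*real r+2)) * (1/4)^r"
proof -
  define W where "W = wp (2*r+2)"
  define w0 where "w0 = wp (2*r)"
  define R where "R = real r"
  define P where "P = (2::real)^(2*r+1)"
  have P: "P > 0" unfolding P_def by simp
  have R: "R \<ge> 0" unfolding R_def by simp
  have w1: "wp (2*Suc r + 2) = (2*R+3)/(2*(R+2)) * W + 1/(2*(R+2))^2"
  proof -
    have "wp (2*r+2+2) = (real (2*r+2)+1)/(real (2*r+2)+2) * wp (2*r+2) + 1/(real (2*r+2)+2)^2"
      by (rule wp_rec)
    note eq0 = this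
    have e1: "2*Suc r + 2 = 2*r+2+2" by simp
    have e2: "real (2*r+2)+1 = 2*R+3" "real (2*r+2)+2 = 2*(R+2)" unfolding R_def by simp_all
    show ?thesis unfolding e1 using eq0 unfolding e2 W_def[symmetric] .
  qed
  have w2: "w0 = (W - 1/(2*(R+1))^2)*(2*(R+1))/(2*R+1)"
  proof -
    have "wp (2*r+2) = (real (2*r)+1)/(real (2*r)+2) * wp (2*r) + 1/(real (2*r)+2)^2"
      by (rule wp_rec)
    moreover have "real (2*r)+1 = 2*R+1" "real (2*r)+2 = 2*(R+1)" unfolding R_def by simp_all
    ultimately have h: "W = (2*R+1)/(2*(R+1)) * w0 + 1/(2*(R+1))^2" unfolding W_def w0_def by simp
    have nz: "2*R+1 \<noteq> 0" "2*(R+1) \<noteq> 0" using R by auto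
    have "(W - 1/(2*(R+1))^2)*(2*(R+1))/(2*R+1) = ((2*R+1)/(2*(R+1)) * w0) * (2*(R+1))/(2*R+1)"
      unfolding h by simp
    also have "\<dots> = w0" using nz by simp
    finally show ?thesis by simp
  qed
  have w3: "wp (2*Suc r) = W" unfolding W_def by simp
  have p1: "(2::real)^(2*Suc r+1) = 4*P" unfolding P_def by simp
  have p2: "((1::real)/4)^r = 2/P" unfolding P_def by (simp add: power_mult power_divide)
  have r1: "real (Suc r + 1) = R+2" "real (r+1) = R+1" unfolding R_def by simp_all
  have lhs: "rhs (Suc r) = 1 / (4*P) * ((2 * ((2*R+3)/(2*(R+2)) * W + 1/(2*(R+2))^2) + W) / 8 - 1 / (16 * (R+2)))"
    unfolding rhs_def w1 w3 p1 r1 ..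
  have rr: "rhs r = 1 / P * ((2 * W + (W - 1/(2*(R+1))^2)*(2*(R+1))/(2*R+1)) / 8 - 1 / (16 * (R+1)))"
    unfolding rhs_def W_def[symmetric] w0_def[symmetric] w2 P_def[symmetric] r1 ..
  have gm: "gam r = (3*R+5)*(2*R+1)/(8*(R+2)*(3*R+2))" unfolding gam_def R_def ..
  show ?thesis unfolding lhs rr gm p2 R_def[symmetric]
    by (rule rs_alg0) (use R P in auto)
qed

lemma main: "T r sums rhs r"
proof (induction r)
  case 0
  then show ?case by (rule base)
next
  case (Suc r)
  define L where "L = (3*real r+4)/(64*(real r+2)^2*(3*real r+2)) * (1/4)^r"
  have lim1: "(\<lambda>m. G r (m+1)) \<longlonglongrightarrow> L"
    unfolding L_def by (rule LIMSEQ_ignore_initial_segment[OF G_lim])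
  have tel: "(\<lambda>m. G r (m+2) - G r (m+1)) sums L"
    using telescope_sums[OF lim1] G_1 by simp
  have "(\<lambda>m. gam r * T r m + (G r (m+2) - G r (m+1))) sums (gam r * rhs r + L)"
    by (intro sums_add sums_mult Suc tel)
  moreover have "T (Suc r) = (\<lambda>m. gam r * T r m + (G r (m+2) - G r (m+1)))"
    by (rule ext) (rule step)
  ultimately show ?case using rhs_step unfolding L_def by simp
qed

theorem theorem5p0p3:
  fixes r :: nat
  shows "(\<lambda>m. let n = m + 1 in
            (real n ^ 2 / (real (2*n + 2*r + 1) * (2 * real n - 1) ^ 2 * real (2*n + 1)))
            * (real ((2*n) choose n) / real ((2*n + 2*r) choose (n + r))))
         sums (1 / 2 ^ (2*r + 1) * ((2 * wp (2*r + 2) + wp (2*r)) / 8 - 1 / (16 * real (r + 1))))"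
  using main[of r] unfolding T_def rhs_def .

end
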